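(* Let $n\ge1$, $k>0$, and let $F$ be a complex polynomial of degree exactly $n$ having all its zeros in $|z|\le k$. Then for all $\alpha,\beta\in\mathbb C$ with $|\alpha|\le1$, $|\beta|\le1$ and all $R>r\ge k$, $$\min_{|z|=1}\big|B[F\circ\sigma](z)+\Phi_k(R,r,\alpha,\beta)B[F\circ\rho](z)\big|\ge\frac{|\lambda_0+\lambda_1 n^2/2+\lambda_2 n^3(n-1)/8|}{k^n}\,\big|R^n+r^n\Phi_k(R,r,\alpha,\beta)\big|\min_{|z|=k}|F(z)|.$$
   Context: Fix complex numbers $\lambda_0,\lambda_1,\lambda_2$ such that all zeros of $U(z)=\lambda_0+n\lambda_1 z+\frac{n(n-1)}{2}\lambda_2 z^2$ lie in the half-plane $\{z\in\mathbb C:|z|\le|z-n/2|\}$. The operator $B$ (of the class $\mathcal B_n$) sends a complex polynomial $P$ of degree at most $n$ to $B[P](z)=\lambda_0P(z)+\lambda_1\frac{nz}{2}P'(z)+\lambda_2\left(\frac{nz}{2}\right)^2\frac{P''(z)}{2!}$. For a polynomial $P$ and a map $\rho$, $P\circ\rho$ denotes $z\mapsto P(\rho(z))$, and $B[P\circ\rho](z)$ is $B$ applied to the polynomial $P\circ\rho$, evaluated at $z$. Note $|\lambda_0+\lambda_1 n^2/2+\lambda_2 n^3(n-1)/8|=|B[z^n]|$ at $|z|=1$. For $k>0$, $R,r>0$ and $\alpha,\beta\in\mathbb C$: $\Phi_k(R,r,\alpha,\beta)=\beta\left\{\left(\frac{R+k}{k+r}\right)^n-|\alpha|\right\}-\alpha$;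 and $\sigma(z)=Rz$, $\rho(z)=rz$. *)

theory Defs
  imports "HOL-Analysis.Analysis" "HOL-Computational_Algebra.Polynomial"
begin

definition Bop :: "nat \<Rightarrow> complex \<Rightarrow> complex \<Rightarrow> complex \<Rightarrow> complex poly \<Rightarrow> complex \<Rightarrow> complex" where
  "Bop n l0 l1 l2 P z =
     l0 * poly P z
     + l1 * (of_nat n * z / 2) * poly (pderiv P) z
     + l2 * (of_nat n * z / 2)^2 * poly (pderiv (pderiv P)) z / 2"

definition Upoly :: "nat \<Rightarrow> complex \<Rightarrow> complex \<Rightarrow> complex \<Rightarrow> complex \<Rightarrow> complex" where
  "Upoly n l0 l1 l2 z = l0 + of_nat n * l1 * z + of_nat (n * (n - 1)) / 2 * l2 * z^2"

definition Phi :: "nat \<Rightarrow> real \<Rightarrow> real \<Rightarrow> real \<Rightarrow> complex \<Rightarrow> complex \<Rightarrow> complex" where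
  "Phi n k R r \<alpha> \<beta> = \<beta> * (complex_of_real (((R + k) / (k + r))^n - cmod \<alpha>)) - \<alpha>"

end

theory Submission
  imports Defs "HOL-Computational_Algebra.Fundamental_Theorem_Algebra"
begin


lemma local_decrease:
  fixes p :: "complex poly"
  assumes nc: "\<not> constant (poly p)" and nz: "poly p z \<noteq> 0" and e: "e > 0"
  shows "\<exists>w. cmod (w - z) < e \<and> cmod (poly p w) < cmod (poly p z)"
proof -
  obtain q where q: "psize q = psize p" "\<forall>x. poly q x = poly p (z + x)"
    using poly_offset[of p z] by blast
  then have qnc: "\<not> constant (poly q)"
    by (metis (no_types, opaque_lifting) add.commute constant_def diff_add_cancel nc)
  let ?a0 = "poly q 0"
  have a00: "?a0 \<noteq> 0" using nz q(2) by simp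
  from a00 have qr: "\<forall>x. poly q x = poly (smult (inverse ?a0) q) x * ?a0"
    by simp
  let ?r = "smult (inverse ?a0) q"
  have rnc: "\<not> constant (poly ?r)"
    using constant_def qnc qr by fastforce
  have r01: "poly ?r 0 = 1"
    by (simp add: a00)
  have mrmq_eq: "cmod (poly ?r w) < 1 \<longleftrightarrow> cmod (poly q w) < cmod ?a0" for w
    by (smt (verit, del_insts) a00 mult_less_cancel_right2 norm_mult qr zero_less_norm_iff)
  from poly_decompose[OF rnc] obtain k a s where
    kas: "a \<noteq> 0" "k \<noteq> 0" "psize s + k + 1 = psize ?r"
    "\<forall>z. poly ?r z = poly ?r 0 + z^k* poly (pCons a s) z" by blast
  have 01: "\<not> constant (poly (pCons 1 (monom a (k - 1))))"
    unfolding constant_def poly_pCons poly_monom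
    by (metis add_cancel_left_right kas(1) mult.commute mult_cancel_right2 power_one)
  obtain w where w: "1 + w^k * a = 0"
    using fundamental_theorem_of_algebra[OF 01] kas(2)
    by (metis mult.commute mult.left_commute poly_monom poly_pCons power_eq_if)
  from poly_bound_exists[of "cmod w" s] obtain m where
    m: "m > 0" "\<forall>z. cmod z \<le> cmod w \<longrightarrow> cmod (poly s z) \<le> m" by blast
  have "w \<noteq> 0"
    using kas(2) w by (auto simp add: power_0_left)
  from w have wm1: "w^k * a = - 1"
    by (simp add: add_eq_0_iff)
  have inv0: "0 < inverse (cmod w ^ (k + 1) * m)"
    by (simp add: \<open>w \<noteq> 0\<close> m(1))
  have ew: "0 < e / cmod w" using e \<open>w \<noteq> 0\<close> by simp
  obtain t where t: "t > 0" "t < 1" "t < inverse (cmod w ^ (k + 1) * m)" "t < e / cmod w"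
  proof -
    define A where "A = inverse (cmod w ^ (k + 1) * m)"
    define B where "B = e / cmod w"
    have A: "A > 0" and B: "B > 0" using inv0 ew unfolding A_def B_def by auto
    define t where "t = min (1/2) (min A B) / 2"
    have "t > 0" "t < 1" "t < A" "t < B" using A B unfolding t_def by (auto simp: min_def)
    then show ?thesis using that unfolding A_def B_def by blast
  qed
  let ?ct = "complex_of_real t"
  let ?w = "?ct * w"
  have "1 + ?w^k * (a + ?w * poly s ?w) = 1 + ?ct^k * (w^k * a) + ?w^k * ?w * poly s ?w"
    using kas(1) by (simp add: algebra_simps power_mult_distrib)
  also have "\<dots> = complex_of_real (1 - t^k) + ?w^k * ?w * poly s ?w"
    unfolding wm1 by simp
  finally have "cmod (1 + ?w^k * (a + ?w * poly s ?w)) =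
    cmod (complex_of_real (1 - t^k) + ?w^k * ?w * poly s ?w)"
    by metis
  with norm_triangle_ineq[of "complex_of_real (1 - t^k)" "?w^k * ?w * poly s ?w"]
  have 11: "cmod (1 + ?w^k * (a + ?w * poly s ?w)) \<le> \<bar>1 - t^k\<bar> + cmod (?w^k * ?w * poly s ?w)"
    unfolding norm_of_real by simp
  have ath: "\<And>x t::real. 0 \<le> x \<Longrightarrow> x < t \<Longrightarrow> t \<le> 1 \<Longrightarrow> \<bar>1 - t\<bar> + x < 1"
    by arith
  have tw: "cmod ?w \<le> cmod w"
    by (smt (verit) mult_le_cancel_right2 norm_ge_zero norm_mult norm_of_real t)
  have "t * (cmod w ^ (k + 1) * m) < 1"
    by (smt (verit, best) inv0 inverse_positive_iff_positive left_inverse mult_strict_right_mono t(3))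
  with zero_less_power[OF t(1), of k] have 30: "t^k * (t* (cmod w ^ (k + 1) * m)) < t^k"
    by simp
  have "cmod (?w^k * ?w * poly s ?w) = t^k * (t* (cmod w ^ (k + 1) * cmod (poly s ?w)))"
    using \<open>w \<noteq> 0\<close> t(1) by (simp add: algebra_simps norm_power norm_mult)
  with 30 have 120: "cmod (?w^k * ?w * poly s ?w) < t^k"
    by (smt (verit, ccfv_SIG) m(2) mult_left_mono norm_ge_zero t(1) tw zero_le_power)
  from power_strict_mono[OF t(2), of k] t(1) kas(2) have 121: "t^k \<le> 1"
    by auto
  from ath[OF norm_ge_zero[of "?w^k * ?w * poly s ?w"] 120 121]
  have "cmod (poly ?r ?w) < 1"
    by (smt (verit) "11" kas(4) poly_pCons r01)
  then have "cmod (poly q ?w) < cmod ?a0" using mrmq_eq by blast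
  moreover have "cmod ?w < e"
  proof -
    have "cmod ?w = t * cmod w" using t(1) by (simp add: norm_mult)
    also have "\<dots> < (e / cmod w) * cmod w" using t(4) \<open>w \<noteq> 0\<close> by (intro mult_strict_right_mono) auto
    finally show ?thesis using \<open>w \<noteq> 0\<close> by simp
  qed
  ultimately show ?thesis using q(2)
    by (rule_tac x="z + ?w" in exI) auto
qed

lemma min_modulus_disc:
  fixes p :: "complex poly"
  assumes nz: "\<forall>w. cmod w \<le> 1 \<longrightarrow> poly p w \<noteq> 0"
    and bd: "\<forall>w. cmod w = 1 \<longrightarrow> m \<le> cmod (poly p w)"
    and w: "cmod w \<le> 1"
  shows "m \<le> cmod (poly p w)"
proof -
  have "continuous_on (cball 0 1) (\<lambda>x. cmod (poly p x))"
    by (intro continuous_intros)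
  then obtain z where zin: "z \<in> cball 0 1" and z: "\<forall>y\<in>cball 0 1. cmod (poly p z) \<le> cmod (poly p y)"
    using continuous_attains_inf[of "cball (0::complex) 1"] by fastforce
  have zw: "cmod (poly p z) \<le> cmod (poly p w)" using z w by simp
  show ?thesis
  proof (cases "constant (poly p)")
    case True
    then have "poly p w = poly p 1" by (simp add: constant_def)
    then show ?thesis using bd by simp
  next
    case nc: False
    have "cmod z = 1"
    proof (rule ccontr)
      assume "cmod z \<noteq> 1"
      then have zl: "cmod z < 1" using zin by simp
      have "poly p z \<noteq> 0" using nz zl by simp
      from local_decrease[OF nc this, of "1 - cmod z"] zl obtain y where
        y: "cmod (y - z) < 1 - cmod z" "cmod (poly p y) < cmod (poly p z)" by auto
      have "cmod y \<le> cmod (y - z) + cmod z" by (metis diff_add_cancel norm_triangle_ineq)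
      then have "y \<in> cball 0 1" using y(1) by simp
      then show False using z y(2) by force
    qed
    then show ?thesis using bd zw by force
  qed
qed


lemma cmod_sum_sq_le:
  fixes y :: "nat \<Rightarrow> complex"
  shows "(cmod (\<Sum>i<d. y i))^2 \<le> of_nat d * (\<Sum>i<d. (cmod (y i))^2)"
proof -
  have r: "(\<Sum>i<d. Re (y i))\<^sup>2 \<le> (\<Sum>i<d. (Re (y i))\<^sup>2) * real d"
    using sum_squared_le_sum_of_squares[of "\<lambda>i. Re (y i)" "{..<d}"] by simp
  have i: "(\<Sum>i<d. Im (y i))\<^sup>2 \<le> (\<Sum>i<d. (Im (y i))\<^sup>2) * real d"
    using sum_squared_le_sum_of_squares[of "\<lambda>i. Im (y i)" "{..<d}"] by simp
  have "(cmod (\<Sum>i<d. y i))^2 = (\<Sum>i<d. Re (y i))\<^sup>2 + (\<Sum>i<d. Im (y i))\<^sup>2"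
    by (simp add: cmod_power2 Re_sum Im_sum)
  also have "\<dots> \<le> (\<Sum>i<d. (Re (y i))\<^sup>2) * real d + (\<Sum>i<d. (Im (y i))\<^sup>2) * real d"
    using r i by linarith
  also have "\<dots> = of_nat d * (\<Sum>i<d. (cmod (y i))^2)"
    by (simp add: cmod_power2 sum.distrib algebra_simps)
  finally show ?thesis .
qed

lemma core_ineq:
  fixes a :: "nat \<Rightarrow> complex" and w :: complex and k :: real
  assumes d: "d \<ge> 1" and a: "\<forall>i<d. cmod (a i) < k" and w: "cmod w \<ge> k"
  shows "cmod (w * (\<Sum>i<d. 1 / (w - a i)) - of_nat d) < k * cmod (\<Sum>i<d. 1 / (w - a i))"
proof -
  define y where "y i = 1 / (w - a i)" for i
  define Y where "Y = (\<Sum>i<d. y i)"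
  define S2 where "S2 = (\<Sum>i<d. (cmod (y i))^2)"
  have k0: "k \<ge> 0" proof - have "cmod (a 0) < k" using a d by simp then show ?thesis using norm_ge_zero[of "a 0"] by linarith qed
  have wa: "w - a i \<noteq> 0" if "i < d" for i
    using a that w by auto
  have each: "(cmod (w * y i - 1))^2 - k^2 * (cmod (y i))^2 < 0" if "i < d" for i
  proof -
    have "w * y i - 1 = a i * y i" using wa[OF that] unfolding y_def by (simp add: field_simps)
    then have "cmod (w * y i - 1) = cmod (a i) * cmod (y i)" by (simp add: norm_mult)
    moreover have "cmod (y i) > 0" using wa[OF that] unfolding y_def by simp
    ultimately have "cmod (w * y i - 1) < k * cmod (y i)" using a that by simp
    moreover have "0 \<le> cmod (w * y i - 1)" by simp
    ultimately have "(cmod (w * y i - 1))^2 < (k * cmod (y i))^2"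
      by (intro power_strict_mono) auto
    then show ?thesis by (simp add: power_mult_distrib)
  qed
  have "(\<Sum>i<d. (cmod (w * y i - 1))^2 - k^2 * (cmod (y i))^2) < (\<Sum>i<d. 0)"
  proof (rule sum_strict_mono)
    show "{..<d} \<noteq> {}" using d by (metis lessThan_empty_iff not_one_le_zero)
    fix i assume "i \<in> {..<d}" then show "(cmod (w * y i - 1))^2 - k^2 * (cmod (y i))^2 < 0"
      using each[of i] by simp
  qed simp
  then have neg: "(\<Sum>i<d. (cmod (w * y i - 1))^2 - k^2 * (cmod (y i))^2) < 0" by simp
  have exp1: "(cmod (u - 1))^2 = (cmod u)^2 - 2 * Re u + 1" for u :: complex
    by (simp only: cmod_power2) (simp add: power2_eq_square algebra_simps)
  have "(\<Sum>i<d. (cmod (w * y i - 1))^2 - k^2 * (cmod (y i))^2)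
      = (\<Sum>i<d. ((cmod w)^2 - k^2) * (cmod (y i))^2 - 2 * Re (w * y i) + 1)"
  proof (rule sum.cong[OF refl])
    fix i
    have "(cmod (w * y i))^2 = (cmod w)^2 * (cmod (y i))^2" by (simp add: norm_mult power_mult_distrib)
    then show "(cmod (w * y i - 1))^2 - k^2 * (cmod (y i))^2
      = ((cmod w)^2 - k^2) * (cmod (y i))^2 - 2 * Re (w * y i) + 1"
      unfolding exp1 by (simp add: left_diff_distrib)
  qed
  also have "\<dots> = ((cmod w)^2 - k^2) * S2 - 2 * Re (w * Y) + of_nat d"
  proof -
    have s1: "Re (w*Y) = (\<Sum>i<d. Re (w * y i))" by (simp add: Y_def sum_distrib_left Re_sum)
    have "(\<Sum>i<d. ((cmod w)^2 - k^2) * (cmod (y i))^2 - 2 * Re (w * y i) + 1)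
       = (\<Sum>i<d. ((cmod w)^2 - k^2) * (cmod (y i))^2) - (\<Sum>i<d. 2 * Re (w * y i)) + (\<Sum>i<d. 1)"
      by (simp only: sum.distrib sum_subtractf)
    also have "\<dots> = ((cmod w)^2 - k^2) * S2 - 2 * Re (w * Y) + of_nat d"
      by (simp only: S2_def s1 sum_distrib_left[symmetric]) simp
    finally show ?thesis .
  qed
  finally have A: "((cmod w)^2 - k^2) * S2 - 2 * Re (w * Y) + of_nat d < 0" using neg by simp
  have cs: "(cmod Y)^2 \<le> of_nat d * S2" unfolding Y_def S2_def by (rule cmod_sum_sq_le)
  have wk: "(cmod w)^2 - k^2 \<ge> 0" using w k0 by (simp add: power_mono)
  have B: "((cmod w)^2 - k^2) * (cmod Y)^2 \<le> ((cmod w)^2 - k^2) * (of_nat d * S2)"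
    using cs wk by (rule mult_left_mono)
  have dpos: "real d > 0" using d by simp
  have C: "((cmod w)^2 - k^2) * (cmod Y)^2 - 2 * real d * Re (w * Y) + (real d)^2 < 0"
  proof -
    have 1: "real d * (((cmod w)^2 - k^2) * S2 - 2 * Re (w * Y) + of_nat d) < 0"
      using A dpos by (simp add: mult_pos_neg)
    have 2: "real d * (((cmod w)^2 - k^2) * S2 - 2 * Re (w * Y) + of_nat d)
       = ((cmod w)^2 - k^2) * (of_nat d * S2) - 2 * real d * Re (w * Y) + (real d)^2"
      by (simp add: algebra_simps power2_eq_square)
    show ?thesis using 1 2 B by linarith
  qed
  have e1: "(cmod (w * Y - of_nat d))^2 = (Re (w*Y) - real d)^2 + (Im (w*Y))^2"
    by (simp add: cmod_power2)
  have e2: "(cmod (w*Y))^2 = (Re (w*Y))^2 + (Im (w*Y))^2"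
    by (simp add: cmod_power2)
  have e3: "(cmod (w*Y))^2 = (cmod w)^2 * (cmod Y)^2"
    by (simp add: norm_mult power_mult_distrib)
  have e4: "(Re (w*Y) - real d)^2 = (Re (w*Y))^2 - 2 * real d * Re (w * Y) + (real d)^2"
    by (simp add: power2_diff)
  have e5: "((cmod w)^2 - k^2) * (cmod Y)^2 = (cmod w)^2 * (cmod Y)^2 - k^2 * (cmod Y)^2"
    by (simp add: left_diff_distrib)
  have e6: "(k * cmod Y)^2 = k^2 * (cmod Y)^2" by (simp add: power_mult_distrib)
  have "(cmod (w * Y - of_nat d))^2 < (k * cmod Y)^2"
    using C e1 e2 e3 e4 e5 e6 by linarith
  then have "cmod (w * Y - of_nat d) < k * cmod Y"
    using k0 by (intro power2_less_imp_less[OF _ mult_nonneg_nonneg[OF k0 norm_ge_zero]])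
  then show ?thesis unfolding Y_def y_def .
qed


definition Epol :: "nat \<Rightarrow> complex \<Rightarrow> complex \<Rightarrow> complex poly \<Rightarrow> complex poly" where
  "Epol d p q P = smult (of_nat d * p) P + [:q, -p:] * pderiv P"

lemma poly_Epol: "poly (Epol d p q P) w = of_nat d * p * poly P w + (q - p * w) * poly (pderiv P) w"
  by (simp add: Epol_def algebra_simps)

lemma poly_pderiv_Epol: "poly (pderiv (Epol d p q P)) w =
   of_nat d * p * poly (pderiv P) w + (q - p * w) * poly (pderiv (pderiv P)) w - p * poly (pderiv P) w"
  by (simp add: Epol_def pderiv_add pderiv_smult pderiv_mult pderiv_pCons pderiv_minus algebra_simps)

lemma coeff_Epol: "coeff (Epol d p q P) j =
   (of_nat d - of_nat j) * p * coeff P j + q * of_nat (Suc j) * coeff P (Suc j)"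
  by (cases j) (simp_all add: Epol_def coeff_pderiv algebra_simps)

lemma poly_prod_lin: "poly (\<Prod>i<d. [:- a i, 1:]) w = (\<Prod>i<(d::nat). w - a i)"
  for a :: "nat \<Rightarrow> complex"
  by (simp add: poly_prod)

lemma pderiv_prod_lin:
  fixes a :: "nat \<Rightarrow> complex" and d :: nat
  assumes "\<forall>i<d. w \<noteq> a i"
  shows "poly (pderiv (\<Prod>i<d. [:- a i, 1:])) w = poly (\<Prod>i<d. [:- a i, 1:]) w * (\<Sum>i<d. 1 / (w - a i))"
  using assms
proof (induction d)
  case 0
  then show ?case by simp
next
  case (Suc d)
  then have IH: "poly (pderiv (\<Prod>i<d. [:- a i, 1:])) w = poly (\<Prod>i<d. [:- a i, 1:]) w * (\<Sum>i<d. 1 / (w - a i))"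
    by simp
  have ne: "w - a d \<noteq> 0" using Suc.prems by simp
  define Q where "Q = (\<Prod>i<d. [:- a i, 1:])"
  have eq: "pderiv (\<Prod>i<Suc d. [:- a i, 1:]) = Q * pderiv [:- a d, 1:] + [:- a d, 1:] * pderiv Q"
    unfolding Q_def by (simp only: prod.lessThan_Suc pderiv_mult)
  have d1: "pderiv [:- a d, 1:] = 1" by (simp add: pderiv_pCons)
  have h1: "poly (pderiv (\<Prod>i<Suc d. [:- a i, 1:])) w = poly Q w + (w - a d) * poly (pderiv Q) w"
    by (simp only: eq poly_add poly_mult d1) simp
  have h2: "poly (\<Prod>i<Suc d. [:- a i, 1:]) w = poly Q w * (w - a d)"
    unfolding Q_def by (simp only: prod.lessThan_Suc poly_mult) simp
  have h3: "(\<Sum>i<Suc d. 1 / (w - a i)) = (\<Sum>i<d. 1 / (w - a i)) + 1 / (w - a d)" by simp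
  show ?case unfolding h1 h2 h3 using IH ne unfolding Q_def[symmetric]
    by (simp add: field_simps)
qed

lemma degree_prod_lin: "degree (\<Prod>i<d. [:- a i, 1::complex:]) \<le> d" for d :: nat
proof (induction d)
  case (Suc d)
  have "degree (\<Prod>i<Suc d. [:- a i, 1::complex:]) \<le> degree (\<Prod>i<d. [:- a i, 1:]) + degree [:- a d, 1::complex:]"
    using degree_mult_le[of "\<Prod>i<d. [:- a i, 1::complex:]" "[:- a d, 1::complex:]"]
    by (simp only: prod.lessThan_Suc)
  then show ?case using Suc by simp
qed simp

lemma coeff_prod_lin_top: "coeff (\<Prod>i<d. [:- a i, 1::complex:]) d = 1" for d :: nat
proof (induction d)
  case (Suc d)
  have "(\<Prod>i<Suc d. [:- a i, 1::complex:]) = [:- a d, 1:] * (\<Prod>i<d. [:- a i, 1:])"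
    by (simp add: mult.commute)
  moreover have "coeff (\<Prod>i<d. [:- a i, 1::complex:]) (Suc d) = 0"
    using degree_prod_lin[of a d] by (intro coeff_eq_0) simp
  ultimately show ?case using Suc by simp
qed simp

lemma coeff_prod_lin_next: "coeff (\<Prod>i<Suc d. [:- a i, 1::complex:]) d = - (\<Sum>i<Suc d. a i)" for d :: nat
proof (induction d)
  case 0
  then show ?case by simp
next
  case (Suc d)
  have "(\<Prod>i<Suc (Suc d). [:- a i, 1::complex:]) = [:- a (Suc d), 1:] * (\<Prod>i<Suc d. [:- a i, 1:])"
    by (simp add: mult.commute)
  then show ?case using Suc coeff_prod_lin_top[of a "Suc d"] by simp
qed



lemma laguerre:
  fixes P :: "complex poly" and k :: real and d :: nat and p q :: complex
  assumes deg: "degree P = d" and d1: "d \<ge> 1"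
    and zeros: "\<forall>a. poly P a = 0 \<longrightarrow> cmod a < k"
    and pq: "cmod q \<ge> k * cmod p" and nz: "p \<noteq> 0 \<or> q \<noteq> 0"
  shows "(\<forall>w. cmod w \<ge> k \<longrightarrow> poly (Epol d p q P) w \<noteq> 0) \<and> degree (Epol d p q P) = d - 1"
proof -
  obtain root where dec: "smult (lead_coeff P) (\<Prod>i<degree P. [:-root i, 1:]) = P"
    using complex_poly_decompose' by blast
  define c where "c = lead_coeff P"
  define Q where "Q = (\<Prod>i<d. [:-root i, 1:])"
  have P: "P = smult c Q" using dec deg unfolding c_def Q_def by simp
  have P0: "P \<noteq> 0" using deg d1 by auto
  then have c0: "c \<noteq> 0" unfolding c_def by simp
  have polyP: "poly P x = c * (\<Prod>i<d. x - root i)" for x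
    unfolding P Q_def by (simp add: poly_prod_lin)
  have rootk: "cmod (root i) < k" if "i < d" for i
  proof -
    have "poly P (root i) = 0" unfolding polyP using that by (auto intro: prod_zero)
    then show ?thesis using zeros by blast
  qed
  have part1: "poly (Epol d p q P) w \<noteq> 0" if w: "cmod w \<ge> k" for w
  proof
    assume E0: "poly (Epol d p q P) w = 0"
    have Pw: "poly P w \<noteq> 0" using zeros w by force
    have wr: "\<forall>i<d. w \<noteq> root i" using rootk w by force
    define Y where "Y = (\<Sum>i<d. 1 / (w - root i))"
    have dP: "poly (pderiv P) w = poly P w * Y"
      unfolding P pderiv_smult Q_def Y_def using pderiv_prod_lin[OF wr] by simp
    have "poly P w * (of_nat d * p + (q - p * w) * Y) = 0"
      using E0 unfolding poly_Epol dP by (simp add: algebra_simps)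
    then have E: "of_nat d * p + (q - p * w) * Y = 0" using Pw by simp
    have core: "cmod (w * Y - of_nat d) < k * cmod Y"
      unfolding Y_def using core_ineq[OF d1, of root k w] rootk w by blast
    show False
    proof (cases "p = 0")
      case True
      then have "q \<noteq> 0" using nz by simp
      then have "Y = 0" using E True by simp
      then show False using core d1 by simp
    next
      case False
      have "w * Y - of_nat d = q * Y / p" using E False by (simp add: field_simps)
      then have "cmod (w * Y - of_nat d) = cmod q * cmod Y / cmod p" by (simp add: norm_mult norm_divide)
      also have "\<dots> \<ge> k * cmod p * cmod Y / cmod p"
        using pq False by (intro divide_right_mono mult_right_mono) auto
      also have "k * cmod p * cmod Y / cmod p = k * cmod Y" using False by simp
      finally show False using core by simp
    qed
  qed
  have cE: "coeff (Epol d p q P) j = 0" if "j \<ge> d" for j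
  proof -
    have "coeff P (Suc j) = 0" using that deg by (intro coeff_eq_0) simp
    moreover have "(of_nat d - of_nat j) * coeff P j = (0::complex)"
    proof (cases "j = d")
      case False
      then have "coeff P j = 0" using that deg by (intro coeff_eq_0) simp
      then show ?thesis by simp
    qed simp
    ultimately show ?thesis unfolding coeff_Epol by (simp add: algebra_simps)
  qed
  obtain d' where d': "d = Suc d'" using d1 by (cases d) auto
  define S where "S = (\<Sum>i<d. root i)"
  have cQ: "coeff Q d' = - S" unfolding Q_def S_def d' by (rule coeff_prod_lin_next)
  have cQd: "coeff Q (Suc d') = 1" unfolding Q_def d'[symmetric] by (rule coeff_prod_lin_top)
  have cE1: "coeff (Epol d p q P) d' = c * (q * of_nat d - p * (\<Sum>i<d. root i))"
  proof -
    have "coeff (Epol d p q P) d' = (of_nat d - of_nat d') * p * (c * coeff Q d') + q * of_nat (Suc d') * (c * coeff Q (Suc d'))"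
      unfolding coeff_Epol P coeff_smult by simp
    also have "\<dots> = c * (q * of_nat d - p * S)" unfolding cQ cQd d' by (simp add: algebra_simps)
    finally show ?thesis unfolding S_def .
  qed
  have ne: "q * of_nat d - p * (\<Sum>i<d. root i) \<noteq> 0"
  proof (cases "p = 0")
    case True
    then show ?thesis using nz d1 by simp
  next
    case False
    have "cmod (p * (\<Sum>i<d. root i)) \<le> cmod p * (\<Sum>i<d. cmod (root i))"
      by (simp add: norm_mult mult_left_mono norm_sum)
    also have "\<dots> < cmod p * (\<Sum>i<d. k)"
    proof (rule mult_strict_left_mono)
      show "(\<Sum>i<d. cmod (root i)) < (\<Sum>i<d. k)"
      proof (rule sum_strict_mono)
        show "{..<d} \<noteq> {}" using d1 by (metis lessThan_empty_iff not_one_le_zero)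
      qed (auto intro: rootk)
    qed (use False in simp)
    also have "\<dots> = of_nat d * (k * cmod p)" by simp
    also have "\<dots> \<le> of_nat d * cmod q" using pq by (intro mult_left_mono) auto
    also have "\<dots> = cmod (q * of_nat d)" by (simp add: norm_mult)
    finally show ?thesis by auto
  qed
  have "degree (Epol d p q P) \<le> d'"
    using cE d' by (intro degree_le) auto
  moreover have "d' \<le> degree (Epol d p q P)"
    using cE1 ne c0 by (intro le_degree) simp
  ultimately show ?thesis using part1 d' by simp
qed



lemma quad_factor:
  fixes A B C :: complex
  shows "\<exists>p1 v1 p2 v2. p1 * p2 = C \<and> p1 * v2 + p2 * v1 = B \<and> v1 * v2 = A"
proof (cases "A = 0")
  case True
  then show ?thesis by (rule_tac x=C in exI, rule_tac x=B in exI, rule_tac x=1 in exI, rule_tac x=0 in exI) simp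
next
  case False
  define D where "D = csqrt (B^2 - 4 * A * C)"
  have D2: "D^2 = B^2 - 4 * A * C" unfolding D_def by simp
  define u1 where "u1 = (- B + D) / (2 * A)"
  define u2 where "u2 = (- B - D) / (2 * A)"
  have s: "A * (u1 + u2) = - B" unfolding u1_def u2_def using False by (simp add: field_simps)
  have pr: "A * (u1 * u2) = C"
  proof -
    have "A * (u1 * u2) = (B^2 - D^2) / (4 * A)" unfolding u1_def u2_def using False
      by (simp add: field_simps power2_eq_square)
    also have "\<dots> = C" unfolding D2 using False by (simp add: field_simps)
    finally show ?thesis .
  qed
  have s2: "B = - (A * u1) - A * u2" using arg_cong[OF s, of uminus] by (simp add: algebra_simps)
  show ?thesis
    by (rule_tac x="- A * u1" in exI, rule_tac x=A in exI, rule_tac x="- u2" in exI, rule_tac x=1 in exI)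
       (use s2 pr in \<open>simp add: algebra_simps\<close>)
qed

lemma factor_cond:
  fixes p v :: complex and g :: "complex \<Rightarrow> complex"
  assumes hU: "\<forall>z. Upoly n l0 l1 l2 z = 0 \<longrightarrow> cmod z \<le> cmod (z - of_nat n / 2)"
    and hn: "n \<ge> 1"
    and fac: "\<forall>X. Upoly n l0 l1 l2 X = (p + v * X) * g X"
  shows "cmod p \<le> cmod (p + of_nat n * v / 2) \<and> (p \<noteq> 0 \<or> v \<noteq> 0)"
proof
  show "cmod p \<le> cmod (p + of_nat n * v / 2)"
  proof (cases "v = 0")
    case True then show ?thesis by simp
  next
    case False
    define X0 where "X0 = - p / v"
    have "Upoly n l0 l1 l2 X0 = 0" using fac False unfolding X0_def by simp
    then have le: "cmod X0 \<le> cmod (X0 - of_nat n / 2)" using hU by blast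
    have e1: "p = - v * X0" using False unfolding X0_def by simp
    have e2: "p + of_nat n * v / 2 = - v * (X0 - of_nat n / 2)" using False unfolding X0_def
      by (simp add: field_simps)
    show ?thesis unfolding e2 using le by (subst e1) (simp add: norm_mult mult_left_mono)
  qed
next
  show "p \<noteq> 0 \<or> v \<noteq> 0"
  proof (rule ccontr)
    assume "\<not> (p \<noteq> 0 \<or> v \<noteq> 0)"
    then have "Upoly n l0 l1 l2 (of_nat n) = 0" using fac by simp
    then have "cmod (of_nat n :: complex) \<le> cmod (of_nat n - of_nat n / 2 :: complex)" using hU by blast
    moreover have "(of_nat n - of_nat n / 2 :: complex) = of_real (real n / 2)" by simp
    ultimately have "real n \<le> real n / 2" by (simp only: norm_of_nat norm_of_real)
    then show False using hn by simp
  qed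
qed

lemma alg2a:
  fixes N M P0 P1 P2 p1 p2 v1 v2 :: complex
  shows "(N-1)*p2*(N*p1*P0 + M* v1*P1) + M* v2*(N*p1*P1 + M* v1*P2 - p1*P1)
    = N*(N-1)*(p1*p2)*P0 + (N-1)*M*(p1 * v2+p2 * v1)*P1 + M^2*(v1 * v2)*P2"
  by (simp add: algebra_simps power2_eq_square)

lemma alg2b:
  fixes N M P0 P1 P2 l0 l1 l2 :: complex
  shows "N*(N-1)*l0*P0 + (N-1)*M*(N*l1)*P1 + M^2*(N*(N-1)/2*l2)*P2
    = N*(N-1)*(l0*P0 + l1*M*P1 + l2*M^2*P2/2)"
  by (simp add: algebra_simps power2_eq_square)

lemma alg2:
  fixes N w P0 P1 P2 p1 p2 v1 v2 l0 l1 l2 :: complex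
  assumes r0: "p1*p2 = l0" and r1: "p1 * v2+p2 * v1 = N*l1" and r2: "v1 * v2 = N*(N-1)/2*l2"
  shows "N*(N-1)*(l0*P0 + l1*(N*w/2)*P1 + l2*(N*w/2)^2*P2/2) =
    (N-1)*p2*(N*p1*P0 + (w*(p1+N * v1/2) - p1*w)*P1)
    + (w*(p2+N * v2/2) - p2*w)*(N*p1*P1 + (w*(p1+N * v1/2) - p1*w)*P2 - p1*P1)"
proof -
  have x1: "w*(p1+N * v1/2) - p1*w = (N*w/2)* v1" by (simp add: algebra_simps)
  have x2: "w*(p2+N * v2/2) - p2*w = (N*w/2)* v2" by (simp add: algebra_simps)
  show ?thesis unfolding x1 x2 alg2a r0 r1 r2 alg2b ..
qed

lemma Bop_identity2:
  fixes P :: "complex poly"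
  assumes n2: "n \<ge> 2"
    and r0: "p1 * p2 = l0" and r1: "p1 * v2 + p2 * v1 = of_nat n * l1"
    and r2: "v1 * v2 = of_nat (n * (n - 1)) / 2 * l2"
  shows "of_nat (n * (n - 1)) * Bop n l0 l1 l2 P w =
     poly (Epol (n - 1) p2 (w * (p2 + of_nat n * v2 / 2)) (Epol n p1 (w * (p1 + of_nat n * v1 / 2)) P)) w"
proof -
  have n1: "of_nat (n - 1) = (of_nat n - 1 :: complex)" using n2 by (simp add: of_nat_diff)
  have nn: "of_nat (n * (n - 1)) = (of_nat n * (of_nat n - 1) :: complex)" unfolding of_nat_mult n1 ..
  have r2': "v1* v2 = of_nat n*(of_nat n-1)/2*l2" using r2 unfolding nn .
  show ?thesis
    unfolding poly_Epol poly_pderiv_Epol Bop_def n1 nn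
    by (rule alg2[OF r0 r1 r2'])
qed

lemma Bop_identity1:
  fixes P :: "complex poly"
  assumes "degree P \<le> 1"
  shows "Bop 1 l0 l1 l2 P w = poly (Epol 1 l0 (w * (l0 + l1 / 2)) P) w"
proof -
  have "degree (pderiv P) = 0" using assms by (simp add: degree_pderiv)
  then have "pderiv (pderiv P) = 0"
    by (metis degree_eq_zeroE pderiv_pCons pderiv_0 add_0 pCons_0_0)
  then show ?thesis unfolding poly_Epol Bop_def by (simp add: algebra_simps)
qed



lemma qcond:
  fixes p v w0 :: complex and k :: real
  assumes "cmod p \<le> cmod (p + of_nat n * v / 2) \<and> (p \<noteq> 0 \<or> v \<noteq> 0)"
    and "cmod w0 \<ge> k" and "k > 0" and "n \<ge> 1"
  shows "cmod (w0 * (p + of_nat n * v / 2)) \<ge> k * cmod p \<and> (p \<noteq> 0 \<or> w0 * (p + of_nat n * v / 2) \<noteq> 0)"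
proof
  have "k * cmod p \<le> cmod w0 * cmod (p + of_nat n * v / 2)"
    using assms by (intro mult_mono) auto
  then show "cmod (w0 * (p + of_nat n * v / 2)) \<ge> k * cmod p" by (simp add: norm_mult)
next
  have w0: "w0 \<noteq> 0" using assms by auto
  show "p \<noteq> 0 \<or> w0 * (p + of_nat n * v / 2) \<noteq> 0"
  proof (cases "p = 0")
    case True
    then have "v \<noteq> 0" using assms by simp
    then show ?thesis using True w0 assms(4) by simp
  qed simp
qed

lemma Bop_nonzero:
  fixes P :: "complex poly" and k :: real
  assumes hU: "\<forall>z. Upoly n l0 l1 l2 z = 0 \<longrightarrow> cmod z \<le> cmod (z - of_nat n / 2)"
    and hn: "n \<ge> 1" and hk: "k > 0" and deg: "degree P = n"
    and zeros: "\<forall>a. poly P a = 0 \<longrightarrow> cmod a < k" and w0: "cmod w0 \<ge> k"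
  shows "Bop n l0 l1 l2 P w0 \<noteq> 0"
proof (cases "n = 1")
  case True
  have fac: "\<forall>X. Upoly n l0 l1 l2 X = (l0 + l1 * X) * (\<lambda>_. 1) X"
    using True by (simp add: Upoly_def)
  have c: "cmod (w0 * (l0 + of_nat n * l1 / 2)) \<ge> k * cmod l0 \<and> (l0 \<noteq> 0 \<or> w0 * (l0 + of_nat n * l1 / 2) \<noteq> 0)"
    by (rule qcond[OF factor_cond[OF hU hn fac] w0 hk hn])
  have "poly (Epol 1 l0 (w0 * (l0 + l1 / 2)) P) w0 \<noteq> 0"
    using laguerre[of P 1 k l0 "w0 * (l0 + l1 / 2)"] True deg zeros c w0 by simp
  moreover have "Bop 1 l0 l1 l2 P w0 = poly (Epol 1 l0 (w0 * (l0 + l1 / 2)) P) w0"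
    using deg True by (intro Bop_identity1) simp
  ultimately show ?thesis using True by simp
next
  case False
  then have n2: "n \<ge> 2" using hn by simp
  obtain p1 v1 p2 v2 where r0: "p1 * p2 = l0" and r1: "p1 * v2 + p2 * v1 = of_nat n * l1"
    and r2: "v1 * v2 = of_nat (n * (n - 1)) / 2 * l2"
    using quad_factor[of l0 "of_nat n * l1" "of_nat (n * (n - 1)) / 2 * l2"] by blast
  have fac1: "\<forall>X. Upoly n l0 l1 l2 X = (p1 + v1 * X) * (\<lambda>X. p2 + v2 * X) X"
  proof
    fix X
    have "(p1 + v1 * X) * (p2 + v2 * X) = p1 * p2 + (p1 * v2 + p2 * v1) * X + (v1 * v2) * X^2"
      by (simp add: algebra_simps power2_eq_square)
    then show "Upoly n l0 l1 l2 X = (p1 + v1 * X) * (\<lambda>X. p2 + v2 * X) X"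
      unfolding Upoly_def r0 r1 r2 by simp
  qed
  have fac2: "\<forall>X. Upoly n l0 l1 l2 X = (p2 + v2 * X) * (\<lambda>X. p1 + v1 * X) X"
    using fac1 by (simp add: mult.commute)
  define q1 where "q1 = w0 * (p1 + of_nat n * v1 / 2)"
  define q2 where "q2 = w0 * (p2 + of_nat n * v2 / 2)"
  have c1: "cmod q1 \<ge> k * cmod p1 \<and> (p1 \<noteq> 0 \<or> q1 \<noteq> 0)"
    unfolding q1_def by (rule qcond[OF factor_cond[OF hU hn fac1] w0 hk hn])
  have c2: "cmod q2 \<ge> k * cmod p2 \<and> (p2 \<noteq> 0 \<or> q2 \<noteq> 0)"
    unfolding q2_def by (rule qcond[OF factor_cond[OF hU hn fac2] w0 hk hn])
  define E1 where "E1 = Epol n p1 q1 P"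
  have L1: "(\<forall>w. cmod w \<ge> k \<longrightarrow> poly E1 w \<noteq> 0) \<and> degree E1 = n - 1"
    unfolding E1_def using laguerre[OF deg hn zeros] c1 by blast
  have z1: "\<forall>a. poly E1 a = 0 \<longrightarrow> cmod a < k" using L1 by (meson not_le)
  have d1: "n - 1 \<ge> 1" using n2 by simp
  have "poly (Epol (n - 1) p2 q2 E1) w0 \<noteq> 0"
    using laguerre[of E1 "n - 1" k p2 q2] L1 d1 z1 c2 w0 by blast
  moreover have "of_nat (n * (n - 1)) * Bop n l0 l1 l2 P w0 = poly (Epol (n - 1) p2 q2 E1) w0"
    unfolding E1_def q1_def q2_def by (rule Bop_identity2[OF n2 r0 r1 r2])
  ultimately show ?thesis by auto
qed



lemma factor_ratio:
  fixes a z :: complex and R r k :: real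
  assumes a: "cmod a < k" and z: "cmod z = 1" and Rr: "R > r" and rk: "r \<ge> k"
  shows "cmod (complex_of_real R * z - a) > (R + k) / (k + r) * cmod (complex_of_real r * z - a)"
proof -
  define s where "s = cmod a"
  define c where "c = Re z * Re a + Im z * Im a"
  have s0: "s \<ge> 0" and sk: "s < k" using a unfolding s_def by auto
  have z1: "(Re z)^2 + (Im z)^2 = 1" using z by (simp add: cmod_power2[symmetric])
  have sa: "(Re a)^2 + (Im a)^2 = s^2" unfolding s_def by (simp add: cmod_power2)
  have ex: "(cmod (complex_of_real x * z - a))^2 = x^2 - 2 * x * c + s^2" for x
  proof -
    have "(cmod (complex_of_real x * z - a))^2 = (x * Re z - Re a)^2 + (x * Im z - Im a)^2"
      by (simp add: cmod_power2)
    also have "\<dots> = x^2 * ((Re z)^2 + (Im z)^2) - 2 * x * c + ((Re a)^2 + (Im a)^2)"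
      unfolding c_def by (simp add: algebra_simps power2_eq_square)
    finally show ?thesis unfolding z1 sa by simp
  qed
  have cs: "\<bar>c\<bar> \<le> s"
  proof -
    have "((Re z)^2 + (Im z)^2) * ((Re a)^2 + (Im a)^2) - c^2 = (Re z * Im a - Im z * Re a)^2"
      unfolding c_def by (simp add: algebra_simps power2_eq_square)
    then have "c^2 \<le> s^2" unfolding z1 sa by (metis diff_ge_0_iff_ge mult_1 zero_le_power2)
    then show ?thesis using s0 by (metis abs_le_square_iff abs_of_nonneg)
  qed
  define A where "A = (R^2 + s^2) * (k + r)^2 - (R + k)^2 * (r^2 + s^2)"
  define B where "B = R * (k + r)^2 - r * (R + k)^2"
  have k0: "k > 0" using sk s0 by linarith
  have fs: "A - 2 * s * B > 0"
  proof -
    have "A - 2 * s * B = ((R - r) * (k + s)) * ((k + r) * (R - s) + (R + k) * (r - s))"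
      unfolding A_def B_def by (simp add: algebra_simps power2_eq_square)
    moreover have "(R - r) * (k + s) > 0" using Rr k0 s0 by simp
    moreover have "(k + r) * (R - s) + (R + k) * (r - s) > 0"
    proof -
      have "(k + r) * (R - s) > 0" using Rr rk sk k0 s0 by (intro mult_pos_pos) linarith+
      moreover have "(R + k) * (r - s) > 0" using Rr rk sk k0 s0 by (intro mult_pos_pos) linarith+
      ultimately show ?thesis by linarith
    qed
    ultimately show ?thesis by simp
  qed
  have fms: "A + 2 * s * B > 0"
  proof -
    have "A + 2 * s * B = ((R - r) * (k - s)) * ((k + r) * (R + s) + (R + k) * (r + s))"
      unfolding A_def B_def by (simp add: algebra_simps power2_eq_square)
    moreover have "(R - r) * (k - s) > 0" using Rr sk by simp
    moreover have "(k + r) * (R + s) + (R + k) * (r + s) > 0"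
    proof -
      have "(k + r) * (R + s) > 0" using Rr rk sk k0 s0 by (intro mult_pos_pos) linarith+
      moreover have "(R + k) * (r + s) > 0" using Rr rk sk k0 s0 by (intro mult_pos_pos) linarith+
      ultimately show ?thesis by linarith
    qed
    ultimately show ?thesis by simp
  qed
  have fc: "A - 2 * c * B > 0"
  proof (cases "B \<ge> 0")
    case True
    have "c * B \<le> s * B" using cs True by (intro mult_right_mono) auto
    then show ?thesis using fs by linarith
  next
    case False
    have "c * B \<le> (- s) * B" using cs False by (intro mult_right_mono_neg) auto
    then show ?thesis using fms by linarith
  qed
  define X where "X = cmod (complex_of_real R * z - a)"
  define Y where "Y = cmod (complex_of_real r * z - a)"
  have "(k + r)^2 * X^2 - (R + k)^2 * Y^2 = A - 2 * c * B"
    unfolding X_def Y_def ex A_def B_def by (simp add: algebra_simps)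
  then have "(R + k)^2 * Y^2 < (k + r)^2 * X^2" using fc by linarith
  then have "((R + k) / (k + r))^2 * Y^2 < X^2"
    using k0 rk by (simp add: power_divide field_simps)
  then have "((R + k) / (k + r) * Y)^2 < X^2" by (simp only: power_mult_distrib)
  then have "(R + k) / (k + r) * Y < X"
    by (rule power2_less_imp_less) (simp add: X_def)
  then show ?thesis unfolding X_def Y_def .
qed

lemma ratio_poly:
  fixes H :: "complex poly" and R r k :: real
  assumes deg: "degree H = d" and d1: "d \<ge> 1"
    and zeros: "\<forall>a. poly H a = 0 \<longrightarrow> cmod a < k"
    and z: "cmod z = 1" and Rr: "R > r" and rk: "r \<ge> k"
  shows "cmod (poly H (complex_of_real R * z)) > ((R + k) / (k + r))^d * cmod (poly H (complex_of_real r * z))"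
proof -
  obtain root where dec: "smult (lead_coeff H) (\<Prod>i<degree H. [:-root i, 1:]) = H"
    using complex_poly_decompose' by blast
  define c where "c = lead_coeff H"
  have H0: "H \<noteq> 0" using deg d1 by auto
  then have c0: "c \<noteq> 0" unfolding c_def by simp
  have polyH: "poly H x = c * (\<Prod>i<d. x - root i)" for x
    by (subst dec[symmetric]) (simp add: deg c_def poly_prod_lin)
  have rootk: "cmod (root i) < k" if "i < d" for i
  proof -
    have "poly H (root i) = 0" unfolding polyH using that by (auto intro: prod_zero)
    then show ?thesis using zeros by blast
  qed
  have k0: "k > 0" using rootk[of 0] d1 norm_ge_zero[of "root 0"] by linarith
  define \<rho> where "\<rho> = (R + k) / (k + r)"
  have rho0: "\<rho> > 0" unfolding \<rho>_def using k0 rk Rr by simp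
  have "(\<Prod>i<d. \<rho> * cmod (complex_of_real r * z - root i)) < (\<Prod>i<d. cmod (complex_of_real R * z - root i))"
  proof (rule prod_mono_strict[of 0])
    show "0 \<in> {..<d}" using d1 by simp
    show "\<rho> * cmod (complex_of_real r * z - root 0) < cmod (complex_of_real R * z - root 0)"
      unfolding \<rho>_def using factor_ratio[OF rootk[of 0] z Rr rk] d1 by simp
    fix i assume i: "i \<in> {..<d}"
    have "\<rho> * cmod (complex_of_real r * z - root i) < cmod (complex_of_real R * z - root i)"
      unfolding \<rho>_def using factor_ratio[OF rootk[of i] z Rr rk] i by simp
    moreover have "0 \<le> \<rho> * cmod (complex_of_real r * z - root i)" using rho0 by simp
    ultimately show "0 \<le> \<rho> * cmod (complex_of_real r * z - root i) \<and>
        \<rho> * cmod (complex_of_real r * z - root i) \<le> cmod (complex_of_real R * z - root i)" by simp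
    show "0 < cmod (complex_of_real R * z - root i)"
      using \<open>\<rho> * cmod (complex_of_real r * z - root i) < cmod (complex_of_real R * z - root i)\<close>
        \<open>0 \<le> \<rho> * cmod (complex_of_real r * z - root i)\<close> by linarith
  qed simp
  then have "\<rho>^d * (\<Prod>i<d. cmod (complex_of_real r * z - root i)) < (\<Prod>i<d. cmod (complex_of_real R * z - root i))"
    by (simp add: prod.distrib)
  then have "cmod c * (\<rho>^d * (\<Prod>i<d. cmod (complex_of_real r * z - root i))) < cmod c * (\<Prod>i<d. cmod (complex_of_real R * z - root i))"
    using c0 by simp
  then show ?thesis unfolding polyH \<rho>_def norm_mult prod_norm[symmetric] by (simp add: algebra_simps)
qed

definition Hpol :: "nat \<Rightarrow> complex \<Rightarrow> complex \<Rightarrow> complex \<Rightarrow> complex poly \<Rightarrow> complex poly" where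
  "Hpol n l0 l1 l2 P = smult l0 P + smult (l1 * of_nat n / 2) (monom 1 1 * pderiv P)
     + smult (l2 * (of_nat n)^2 / 8) (monom 1 2 * pderiv (pderiv P))"

lemma poly_Hpol: "poly (Hpol n l0 l1 l2 P) w = Bop n l0 l1 l2 P w"
  by (simp add: Hpol_def Bop_def poly_monom power2_eq_square field_simps)

lemma coeff_Hpol:
  assumes "degree P = n" "n \<ge> 1"
  shows "coeff (Hpol n l0 l1 l2 P) n =
    (l0 + l1 * of_nat n ^ 2 / 2 + l2 * of_nat n ^ 3 * (of_nat n - 1) / 8) * lead_coeff P"
proof -
  obtain m where m: "n = Suc m" using assms by (cases n) auto
  have c1: "coeff (monom 1 1 * pderiv P) n = of_nat n * coeff P n"
    unfolding m by (simp add: coeff_monom_mult coeff_pderiv)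
  have c2: "coeff (monom 1 2 * pderiv (pderiv P)) n = of_nat n * (of_nat n - 1) * coeff P n"
  proof (cases m)
    case 0 then show ?thesis using m by (simp add: coeff_monom_mult)
  next
    case (Suc j)
    then have "coeff (monom 1 2 * pderiv (pderiv P)) n = of_nat (Suc (Suc j)) * of_nat (Suc j) * coeff P n"
      using m by (simp add: coeff_monom_mult coeff_pderiv)
    then show ?thesis using m Suc by (simp add: algebra_simps)
  qed
  show ?thesis unfolding Hpol_def coeff_add coeff_smult c1 c2 using assms(1)
    by (simp add: field_simps power2_eq_square power3_eq_cube)
qed

lemma degree_Hpol:
  assumes "degree P = n" "n \<ge> 1"
  shows "degree (Hpol n l0 l1 l2 P) \<le> n"
proof -
  have "degree (monom (1::complex) 1 * pderiv P) \<le> n"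
  proof (cases "P = 0")
    case False
    show ?thesis
      using degree_mult_le[of "monom (1::complex) 1" "pderiv P"] assms degree_pderiv[of P] degree_monom_le[of "1::complex" 1]
      by (cases n) auto
  qed simp
  moreover have "degree (monom (1::complex) 2 * pderiv (pderiv P)) \<le> n"
  proof (cases "n = 1")
    case True
    then have "degree (pderiv P) = 0" using assms by (simp add: degree_pderiv)
    then have "pderiv (pderiv P) = 0"
      by (metis degree_eq_zeroE pderiv_pCons pderiv_0 add_0 pCons_0_0)
    then show ?thesis by simp
  next
    case False
    then show ?thesis
    using degree_mult_le[of "monom (1::complex) 2" "pderiv (pderiv P)"] assms degree_pderiv[of P]
      degree_pderiv[of "pderiv P"] degree_monom_le[of "1::complex" 2]
    by (cases n; cases "n - 1") auto
  qed
  ultimately show ?thesis unfolding Hpol_def using assms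
    by (intro degree_add_le degree_smult_le[THEN order_trans]) auto
qed



lemma Bop_dil: "Bop n l0 l1 l2 (P \<circ>\<^sub>p [:0, c:]) z = Bop n l0 l1 l2 P (c * z)"
proof -
  have d1: "pderiv (P \<circ>\<^sub>p [:0, c:]) = smult c (pderiv P \<circ>\<^sub>p [:0, c:])"
    by (simp add: pderiv_pcompose pderiv_pCons)
  have d2: "pderiv (pderiv (P \<circ>\<^sub>p [:0, c:])) = smult (c * c) (pderiv (pderiv P) \<circ>\<^sub>p [:0, c:])"
    unfolding d1 by (simp add: pderiv_smult pderiv_pcompose pderiv_pCons)
  have e1: "poly (pderiv (P \<circ>\<^sub>p [:0, c:])) z = c * poly (pderiv P) (c * z)"
    by (simp add: d1 poly_pcompose mult.commute)
  have e2: "poly (pderiv (pderiv (P \<circ>\<^sub>p [:0, c:]))) z = c * c * poly (pderiv (pderiv P)) (c * z)"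
    by (simp only: d2) (simp add: poly_pcompose mult.commute)
  show ?thesis unfolding Bop_def e1 e2
    by (simp add: poly_pcompose power2_eq_square algebra_simps)
qed

lemma Bop_diff: "Bop n l0 l1 l2 (P - smult c Q) w = Bop n l0 l1 l2 P w - c * Bop n l0 l1 l2 Q w"
  by (simp add: Bop_def pderiv_diff pderiv_smult field_simps)

lemma Bop_monom:
  assumes "n \<ge> 1"
  shows "Bop n l0 l1 l2 (monom 1 n) w =
    (l0 + l1 * of_nat n ^ 2 / 2 + l2 * of_nat n ^ 3 * (of_nat n - 1) / 8) * w ^ n"
proof -
  obtain m where m: "n = Suc m" using assms by (cases n) auto
  show ?thesis
  proof (cases m)
    case 0
    then show ?thesis using m by (simp add: Bop_def pderiv_monom poly_monom algebra_simps)
  next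
    case (Suc j)
    have "Bop n l0 l1 l2 (monom 1 n) w = l0 * w ^ n + l1 * (of_nat n * w / 2) * (of_nat n * w ^ Suc j)
       + l2 * (of_nat n * w / 2)^2 * (of_nat n * of_nat (Suc j) * w ^ j) / 2"
      unfolding Bop_def using m Suc by (simp add: pderiv_monom poly_monom)
    also have "\<dots> = (l0 + l1 * of_nat n ^ 2 / 2 + l2 * of_nat n ^ 3 * (of_nat n - 1) / 8) * w ^ n"
      using m Suc by (simp add: field_simps power2_eq_square power3_eq_cube)
    finally show ?thesis .
  qed
qed

lemma Phi_bound:
  assumes ha: "cmod \<alpha> \<le> 1" and hb: "cmod \<beta> \<le> 1" and hk: "k > 0" and Rr: "R > r" and rk: "r \<ge> k"
  shows "cmod (Phi n k R r \<alpha> \<beta>) \<le> ((R + k) / (k + r)) ^ n"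
proof -
  define t where "t = ((R + k) / (k + r)) ^ n"
  have "(R + k) / (k + r) \<ge> 1" using hk Rr rk by simp
  then have t1: "t \<ge> 1" unfolding t_def by (simp add: one_le_power)
  then have ta: "t - cmod \<alpha> \<ge> 0" using ha by simp
  have "cmod (Phi n k R r \<alpha> \<beta>) \<le> cmod (\<beta> * complex_of_real (t - cmod \<alpha>)) + cmod \<alpha>"
    unfolding Phi_def t_def[symmetric] by (rule norm_triangle_ineq4)
  also have "cmod (\<beta> * complex_of_real (t - cmod \<alpha>)) = cmod \<beta> * (t - cmod \<alpha>)"
  proof -
    have "cmod (complex_of_real (t - cmod \<alpha>)) = t - cmod \<alpha>" by (simp only: norm_of_real abs_of_nonneg[OF ta])
    then show ?thesis by (simp only: norm_mult)
  qed
  also have "\<dots> \<le> 1 * (t - cmod \<alpha>)" using hb ta by (intro mult_right_mono) auto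
  finally show ?thesis unfolding t_def by simp
qed

lemma main_nz:
  fixes G :: "complex poly" and k R r :: real
  assumes hU: "\<forall>z. Upoly n l0 l1 l2 z = 0 \<longrightarrow> cmod z \<le> cmod (z - of_nat n / 2)"
    and hn: "n \<ge> 1" and hk: "k > 0" and deg: "degree G = n"
    and zeros: "\<forall>a. poly G a = 0 \<longrightarrow> cmod a < k"
    and cn: "l0 + l1 * of_nat n ^ 2 / 2 + l2 * of_nat n ^ 3 * (of_nat n - 1) / 8 \<noteq> 0"
    and ha: "cmod \<alpha> \<le> 1" and hb: "cmod \<beta> \<le> 1" and Rr: "R > r" and rk: "r \<ge> k"
    and z: "cmod z = 1"
  shows "Bop n l0 l1 l2 G (complex_of_real R * z) + Phi n k R r \<alpha> \<beta> * Bop n l0 l1 l2 G (complex_of_real r * z) \<noteq> 0"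
proof -
  define H where "H = Hpol n l0 l1 l2 G"
  have pH: "poly H w = Bop n l0 l1 l2 G w" for w unfolding H_def by (rule poly_Hpol)
  have zH: "\<forall>a. poly H a = 0 \<longrightarrow> cmod a < k"
    using Bop_nonzero[OF hU hn hk deg zeros] unfolding pH by (meson not_le)
  have G0: "G \<noteq> 0" using deg hn by auto
  have "lead_coeff G \<noteq> 0" using G0 by simp
  then have "coeff H n \<noteq> 0" unfolding H_def coeff_Hpol[OF deg hn] using cn by simp
  then have "n \<le> degree H" by (rule le_degree)
  moreover have "degree H \<le> n" unfolding H_def by (rule degree_Hpol[OF deg hn])
  ultimately have dH: "degree H = n" by simp
  have rat: "cmod (poly H (complex_of_real R * z)) > ((R + k) / (k + r))^n * cmod (poly H (complex_of_real r * z))"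
    by (rule ratio_poly[OF dH hn zH z Rr rk])
  have pb: "cmod (Phi n k R r \<alpha> \<beta>) \<le> ((R + k) / (k + r)) ^ n" by (rule Phi_bound[OF ha hb hk Rr rk])
  have "cmod (Phi n k R r \<alpha> \<beta> * poly H (complex_of_real r * z)) \<le> ((R + k) / (k + r))^n * cmod (poly H (complex_of_real r * z))"
    unfolding norm_mult using pb by (intro mult_right_mono) auto
  then have "cmod (Phi n k R r \<alpha> \<beta> * poly H (complex_of_real r * z)) < cmod (poly H (complex_of_real R * z))"
    using rat by linarith
  then have "poly H (complex_of_real R * z) + Phi n k R r \<alpha> \<beta> * poly H (complex_of_real r * z) \<noteq> 0"
    by (metis add_eq_0_iff norm_minus_cancel order_less_irrefl)
  then show ?thesis unfolding pH .
qed



lemma lower_bound_F: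
  fixes F :: "complex poly" and k m :: real
  assumes hn: "n \<ge> 1" and hk: "k > 0" and hdeg: "degree F = n"
    and hzeros: "\<forall>z. poly F z = 0 \<longrightarrow> cmod z \<le> k"
    and hm: "\<forall>z\<in>sphere 0 k. m \<le> cmod (poly F z)" and m0: "m > 0"
  shows "m \<le> cmod (lead_coeff F) * k ^ n"
    and "\<And>x. cmod x \<ge> k \<Longrightarrow> m * cmod x ^ n \<le> k ^ n * cmod (poly F x)"
proof -
  define F1 where "F1 = F \<circ>\<^sub>p [:0, complex_of_real k:]"
  define P where "P = reflect_poly F1"
  have F0: "F \<noteq> 0" using hdeg hn by auto
  have dF1: "degree F1 = n" unfolding F1_def using hdeg hk by (simp add: degree_pcompose)
  have pP: "poly P w = w ^ n * poly F (complex_of_real k / w)" if "w \<noteq> 0" for w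
    unfolding P_def using that dF1 by (simp add: poly_reflect_poly_nz F1_def poly_pcompose divide_inverse mult.commute)
  have lF1: "lead_coeff F1 = lead_coeff F * complex_of_real k ^ n"
    unfolding F1_def using hk hdeg by (subst lead_coeff_comp) auto
  have pP0: "poly P 0 = lead_coeff F * complex_of_real k ^ n"
    unfolding P_def using lF1 by simp
  have sph: "complex_of_real k / w \<in> sphere 0 k" if "cmod w = 1" for w
    using that hk by (simp add: norm_divide)
  have nz: "\<forall>w. cmod w \<le> 1 \<longrightarrow> poly P w \<noteq> 0"
  proof (intro allI impI)
    fix w :: complex assume w: "cmod w \<le> 1"
    show "poly P w \<noteq> 0"
    proof (cases "w = 0")
      case True
      then show ?thesis using pP0 F0 hk by simp
    next
      case False
      have ge: "cmod (complex_of_real k / w) \<ge> k"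
        using False w hk by (simp add: norm_divide field_simps mult_left_le_one_le)
      have "poly F (complex_of_real k / w) \<noteq> 0"
      proof
        assume z: "poly F (complex_of_real k / w) = 0"
        then have "cmod (complex_of_real k / w) \<le> k" using hzeros by blast
        then have "complex_of_real k / w \<in> sphere 0 k" using ge by simp
        then have "m \<le> 0" using hm z by force
        then show False using m0 by simp
      qed
      then show ?thesis using pP[OF False] False by simp
    qed
  qed
  have bd: "\<forall>w. cmod w = 1 \<longrightarrow> m \<le> cmod (poly P w)"
  proof (intro allI impI)
    fix w :: complex assume w: "cmod w = 1"
    then have "w \<noteq> 0" by auto
    then have "cmod (poly P w) = cmod (poly F (complex_of_real k / w))"
      using pP w by (simp add: norm_mult norm_power)
    then show "m \<le> cmod (poly P w)" using hm sph[OF w] by simp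
  qed
  have mm: "m \<le> cmod (poly P w)" if "cmod w \<le> 1" for w
    by (rule min_modulus_disc[OF nz bd that])
  show "m \<le> cmod (lead_coeff F) * k ^ n"
    using mm[of 0] pP0 hk by (simp add: norm_mult norm_power)
  fix x :: complex assume x: "cmod x \<ge> k"
  then have x0: "x \<noteq> 0" using hk by auto
  define w where "w = complex_of_real k / x"
  have w0: "w \<noteq> 0" using x0 hk unfolding w_def by simp
  have w1: "cmod w \<le> 1" using x x0 hk unfolding w_def by (simp add: norm_divide)
  have kw: "complex_of_real k / w = x" using hk x0 unfolding w_def by simp
  have "m \<le> cmod w ^ n * cmod (poly F x)"
    using mm[OF w1] pP[OF w0] kw by (simp add: norm_mult norm_power)
  also have "cmod w ^ n = k ^ n / cmod x ^ n" unfolding w_def using hk by (simp add: norm_divide power_divide)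
  finally have "m \<le> k ^ n / cmod x ^ n * cmod (poly F x)" .
  then show "m * cmod x ^ n \<le> k ^ n * cmod (poly F x)"
    using x0 by (simp add: field_simps)
qed

theorem corollary2p4:
  fixes n :: nat and k R r :: real and l0 l1 l2 \<alpha> \<beta> :: complex and F :: "complex poly"
  assumes hU: "\<forall>z. Upoly n l0 l1 l2 z = 0 \<longrightarrow> cmod z \<le> cmod (z - of_nat n / 2)"
    and hn: "n \<ge> 1" and hk: "k > 0"
    and hdeg: "degree F = n"
    and hzeros: "\<forall>z. poly F z = 0 \<longrightarrow> cmod z \<le> k"
    and ha: "cmod \<alpha> \<le> 1" and hb: "cmod \<beta> \<le> 1"
    and hRr: "R > r" and hrk: "r \<ge> k"
  shows "(INF z\<in>sphere 0 1.
            cmod (Bop n l0 l1 l2 (F \<circ>\<^sub>p [:0, complex_of_real R:]) z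
                  + Phi n k R r \<alpha> \<beta> * Bop n l0 l1 l2 (F \<circ>\<^sub>p [:0, complex_of_real r:]) z))
         \<ge> cmod (l0 + l1 * of_nat n ^ 2 / 2 + l2 * of_nat n ^ 3 * (of_nat n - 1) / 8) / k ^ n
           * cmod (complex_of_real (R ^ n) + complex_of_real (r ^ n) * Phi n k R r \<alpha> \<beta>)
           * (INF z\<in>sphere 0 k. cmod (poly F z))"
proof -
  define cn where "cn = l0 + l1 * of_nat n ^ 2 / 2 + l2 * of_nat n ^ 3 * (of_nat n - 1) / 8"
  define \<Phi> where "\<Phi> = Phi n k R r \<alpha> \<beta>"
  define m where "m = (INF z\<in>sphere 0 k. cmod (poly F z))"
  define K where "K = cmod cn / k ^ n * cmod (complex_of_real (R ^ n) + complex_of_real (r ^ n) * \<Phi>) * m"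
  define T where "T z = Bop n l0 l1 l2 (F \<circ>\<^sub>p [:0, complex_of_real R:]) z + \<Phi> * Bop n l0 l1 l2 (F \<circ>\<^sub>p [:0, complex_of_real r:]) z" for z
  have ne_k: "sphere (0::complex) k \<noteq> {}" using hk
    by (metis empty_iff mem_sphere_0 norm_of_real abs_of_pos)
  have bddk: "bdd_below ((\<lambda>z. cmod (poly F z)) ` sphere 0 k)"
    by (rule bdd_belowI[of _ 0]) auto
  have hm: "\<forall>z\<in>sphere 0 k. m \<le> cmod (poly F z)"
    unfolding m_def using bddk by (auto intro: cINF_lower)
  have m0: "m \<ge> 0" unfolding m_def using ne_k by (intro cINF_greatest) auto
  have key: "K \<le> cmod (T z)" if z: "cmod z = 1" for z
  proof (rule ccontr)
    assume "\<not> K \<le> cmod (T z)"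
    then have lt: "cmod (T z) < K" by simp
    then have K0: "K > 0" using norm_ge_zero[of "T z"] by linarith
    have mpos: "m > 0" using K0 m0 unfolding K_def by (cases "m = 0") auto
    have cn0: "cn \<noteq> 0" using K0 unfolding K_def by auto
    define S where "S = cn * complex_of_real (m / k ^ n) * (complex_of_real (R ^ n) + complex_of_real (r ^ n) * \<Phi>) * z ^ n"
    have cS: "cmod S = K"
    proof -
      have "cmod S = cmod cn * cmod (complex_of_real (m / k ^ n)) * cmod (complex_of_real (R ^ n) + complex_of_real (r ^ n) * \<Phi>) * cmod (z ^ n)"
        unfolding S_def by (simp only: norm_mult)
      also have "cmod (complex_of_real (m / k ^ n)) = m / k ^ n" using m0 hk by (simp only: norm_of_real) simp
      also have "cmod (z ^ n) = 1" using z by (simp add: norm_power)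
      finally show ?thesis unfolding K_def by simp
    qed
    then have S0: "S \<noteq> 0" using K0 by auto
    define lam where "lam = T z / S"
    have lam: "cmod lam < 1" unfolding lam_def using lt cS S0 K0 by (simp add: norm_divide)
    define c where "c = lam * complex_of_real (m / k ^ n)"
    have cc: "cmod c < m / k ^ n"
    proof -
      have "cmod c = cmod lam * (m / k ^ n)" unfolding c_def using mpos hk by (simp only: norm_mult norm_of_real) (simp add: abs_of_pos)
      also have "\<dots> < 1 * (m / k ^ n)" using lam mpos hk by (intro mult_strict_right_mono) auto
      finally show ?thesis by simp
    qed
    define G where "G = F - smult c (monom 1 n)"
    note lb = lower_bound_F[OF hn hk hdeg hzeros hm mpos]
    have lead: "cmod (lead_coeff F) \<ge> m / k ^ n" using lb(1) hk by (simp add: field_simps)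
    have cG: "coeff G n = lead_coeff F - c" unfolding G_def using hdeg by (simp add: coeff_monom)
    have "coeff G n \<noteq> 0" unfolding cG using cc lead by auto
    then have "n \<le> degree G" by (rule le_degree)
    moreover have "degree G \<le> n" unfolding G_def using hdeg
      by (intro degree_diff_le) (auto intro: degree_smult_le[THEN order_trans] simp: degree_monom_eq)
    ultimately have dG: "degree G = n" by simp
    have zG: "\<forall>a. poly G a = 0 \<longrightarrow> cmod a < k"
    proof (intro allI impI)
      fix a assume ga: "poly G a = 0"
      show "cmod a < k"
      proof (rule ccontr)
        assume "\<not> cmod a < k"
        then have ak: "cmod a \<ge> k" by simp
        then have a0: "a \<noteq> 0" using hk by auto
        have "poly F a = c * a ^ n" using ga unfolding G_def by (simp add: poly_monom)
        then have "cmod (poly F a) = cmod c * cmod a ^ n" by (simp add: norm_mult norm_power)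
        also have "\<dots> < m / k ^ n * cmod a ^ n" using cc a0 by (intro mult_strict_right_mono) auto
        finally have "k ^ n * cmod (poly F a) < m * cmod a ^ n" using hk by (simp add: field_simps)
        then show False using lb(2)[OF ak] by simp
      qed
    qed
    have nz: "Bop n l0 l1 l2 G (complex_of_real R * z) + \<Phi> * Bop n l0 l1 l2 G (complex_of_real r * z) \<noteq> 0"
      unfolding \<Phi>_def using main_nz[OF hU hn hk dG zG _ ha hb hRr hrk z] cn0 unfolding cn_def by blast
    have BG: "Bop n l0 l1 l2 G w = Bop n l0 l1 l2 F w - c * (cn * w ^ n)" for w
      unfolding G_def Bop_diff Bop_monom[OF hn] cn_def ..
    have TT: "T z = Bop n l0 l1 l2 F (complex_of_real R * z) + \<Phi> * Bop n l0 l1 l2 F (complex_of_real r * z)"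
      unfolding T_def Bop_dil ..
    have "Bop n l0 l1 l2 G (complex_of_real R * z) + \<Phi> * Bop n l0 l1 l2 G (complex_of_real r * z)
        = T z - lam * S"
      unfolding BG TT S_def c_def by (simp add: algebra_simps power_mult_distrib)
    also have "\<dots> = 0" unfolding lam_def using S0 by simp
    finally show False using nz by simp
  qed
  have ne1: "sphere (0::complex) 1 \<noteq> {}" by (metis empty_iff mem_sphere_0 norm_one)
  have "K \<le> (INF z\<in>sphere 0 1. cmod (T z))"
    using ne1 key by (intro cINF_greatest) auto
  then show ?thesis unfolding K_def T_def cn_def \<Phi>_def m_def .
qed

end
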